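(* Let $n$ and $r$ be positive integers satisfying $\frac{r^2+r}{2}>n\geq r^{3/2}+\frac{r}{2}+1$. Then $$b(\mathrm{S}_{n,r})=\left\lceil\left(3\left(2n+r-\frac{5}{4}\right)+r^2\right)^{1/2}-r-\frac{3}{2}\right\rceil.$$
   Context: $\mathrm{S}_{n,r}$ denotes the symmetric group $\mathrm{S}_n$ acting naturally on the set of $r$-element subsets of $[n]=\{1,\dots,n\}$. For a permutation group $G$ on a set $\Omega$, $b(G)$ is the minimum size of a subset of $\Omega$ whose pointwise stabiliser in $G$ is trivial. *)

theory Defs
  imports Complex_Main "HOL-Combinatorics.Permutations"
begin

definition r_subsets :: "nat \<Rightarrow> nat \<Rightarrow> nat set set" where
  "r_subsets n r = {A. A \<subseteq> {1..n} \<and> card A = r}"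

definition is_base_Snr :: "nat \<Rightarrow> nat \<Rightarrow> nat set set \<Rightarrow> bool" where
  "is_base_Snr n r B \<longleftrightarrow> B \<subseteq> r_subsets n r \<and>
     (\<forall>\<sigma>. \<sigma> permutes {1..n} \<and> (\<forall>A\<in>B. \<sigma> ` A = A) \<longrightarrow> \<sigma> = id)"

definition base_size_Snr :: "nat \<Rightarrow> nat \<Rightarrow> nat" where
  "base_size_Snr n r = (LEAST k. \<exists>B. is_base_Snr n r B \<and> card B = k)"

end

theory Submission
  imports Defs
begin


lemma card_filter_sum: "finite A \<Longrightarrow> card {x\<in>A. P x} = (\<Sum>x\<in>A. if P x then 1 else 0)"
  by (simp add: sum.inter_filter[symmetric])

lemma double_count:
  assumes "finite X" "finite B"
  shows "(\<Sum>x\<in>X. card {A\<in>B. x\<in>A}) = (\<Sum>A\<in>B. card (A \<inter> X))"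
proof -
  have "(\<Sum>x\<in>X. card {A\<in>B. x\<in>A}) = (\<Sum>x\<in>X. \<Sum>A\<in>B. if x\<in>A then 1 else 0)"
    using assms by (simp add: card_filter_sum)
  also have "\<dots> = (\<Sum>A\<in>B. \<Sum>x\<in>X. if x\<in>A then 1 else 0)" by (rule sum.swap)
  also have "\<dots> = (\<Sum>A\<in>B. card {x\<in>X. x\<in>A})"
    using assms by (simp add: card_filter_sum)
  also have "\<dots> = (\<Sum>A\<in>B. card (A \<inter> X))"
    by (intro sum.cong refl arg_cong[where f=card]) auto
  finally show ?thesis .
qed

lemma transpose_image_fix:
  assumes "x \<in> A \<longleftrightarrow> y \<in> A"
  shows "Transposition.transpose x y ` A = A"
  using assms by (auto simp: Transposition.transpose_def image_def)

definition cw :: "nat \<Rightarrow> nat" where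
  "cw m = (if m = 0 then 3 else if m = 1 then 2 else if m = 2 then 1 else 0)"

lemma cw_ge: "3 \<le> m + cw m" by (simp add: cw_def)

lemma sum_level:
  assumes "finite B"
  shows "(\<Sum>S\<in>Pow B. (if card S = j then a else 0::nat)) = a * (card B choose j)"
proof -
  have "(\<Sum>S\<in>Pow B. (if card S = j then a else 0::nat)) = a * card {S\<in>Pow B. card S = j}"
    using assms by (simp add: sum.inter_filter[symmetric])
  also have "{S\<in>Pow B. card S = j} = {S. S \<subseteq> B \<and> card S = j}" by auto
  finally show ?thesis using n_subsets[OF assms] by simp
qed

lemma sum_cw:
  assumes "finite B"
  shows "2 * (\<Sum>S\<in>Pow B. cw (card S)) = 6 + 4 * card B + card B * (card B - 1)"
proof -
  have e: "cw m = (if m = 0 then 3 else 0) + (if m = 1 then 2 else 0) + (if m = 2 then 1 else 0)" for m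
    by (simp add: cw_def)
  have "(\<Sum>S\<in>Pow B. cw (card S)) = (\<Sum>S\<in>Pow B. (if card S = 0 then 3 else 0)) +
     (\<Sum>S\<in>Pow B. (if card S = 1 then 2 else 0)) + (\<Sum>S\<in>Pow B. (if card S = 2 then 1 else 0))"
    by (simp only: e sum.distrib)
  also have "\<dots> = 3 * (card B choose 0) + 2 * (card B choose 1) + 1 * (card B choose 2)"
    using sum_level[OF assms] by presburger
  finally have "(\<Sum>S\<in>Pow B. cw (card S)) = 3 + 2 * card B + card B * (card B - 1) div 2"
    by (simp add: choose_two)
  moreover have "even (card B * (card B - 1))" by auto
  ultimately show ?thesis by fastforce
qed


lemma base_lower:
  assumes "is_base_Snr n r B"
  shows "6 * n \<le> card B * card B + (2 * r + 3) * card B + 6"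
proof -
  define k where "k = card B"
  have Bsub: "B \<subseteq> r_subsets n r" and stab: "\<And>\<sigma>. \<sigma> permutes {1..n} \<Longrightarrow> (\<forall>A\<in>B. \<sigma> ` A = A) \<Longrightarrow> \<sigma> = id"
    using assms unfolding is_base_Snr_def by auto
  have "B \<subseteq> Pow {1..n}" using Bsub unfolding r_subsets_def by auto
  hence finB: "finite B" by (rule finite_subset) simp
  define g where "g x = {A\<in>B. x\<in>A}" for x
  have inj: "inj_on g {1..n}"
  proof (rule inj_onI, rule ccontr)
    fix x y assume xy: "x \<in> {1..n}" "y \<in> {1..n}" "g x = g y" "x \<noteq> y"
    have "Transposition.transpose x y permutes {1..n}" using xy by (intro permutes_swap_id)
    moreover have "\<forall>A\<in>B. Transposition.transpose x y ` A = A"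
    proof
      fix A assume "A \<in> B"
      hence "x \<in> A \<longleftrightarrow> y \<in> A" using xy(3) unfolding g_def by blast
      thus "Transposition.transpose x y ` A = A" by (rule transpose_image_fix)
    qed
    ultimately have "Transposition.transpose x y = id" by (rule stab)
    hence "Transposition.transpose x y x = x" by simp
    thus False using xy(4) by simp
  qed
  have "(\<Sum>x\<in>{1..n}. card (g x)) = (\<Sum>A\<in>B. card (A \<inter> {1..n}))"
    unfolding g_def by (rule double_count) (auto simp: finB)
  also have "\<dots> = (\<Sum>A\<in>B. r)"
    by (intro sum.cong refl) (use Bsub in \<open>auto simp: r_subsets_def Int_absorb2\<close>)
  finally have S1: "(\<Sum>x\<in>{1..n}. card (g x)) = k * r" by (simp add: k_def)
  have "(\<Sum>x\<in>{1..n}. cw (card (g x))) = (\<Sum>S\<in>g ` {1..n}. cw (card S))"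
    using sum.reindex[OF inj, of "\<lambda>S. cw (card S)"] by simp
  also have "\<dots> \<le> (\<Sum>S\<in>Pow B. cw (card S))"
    by (rule sum_mono2) (auto simp: finB g_def)
  finally have S2: "2 * (\<Sum>x\<in>{1..n}. cw (card (g x))) \<le> 6 + 4 * k + k * (k - 1)"
    using sum_cw[OF finB] unfolding k_def by linarith
  have "(\<Sum>x\<in>{1..n}. 3) \<le> (\<Sum>x\<in>{1..n}. card (g x) + cw (card (g x)))"
    by (rule sum_mono) (rule cw_ge)
  hence "3 * n \<le> k * r + (\<Sum>x\<in>{1..n}. cw (card (g x)))"
    using S1 by (simp add: sum.distrib)
  hence "6 * n \<le> 2 * k * r + 6 + 4 * k + k * (k - 1)" using S2 by linarith
  moreover have "k * (k - 1) + k = k * k" by (cases k) auto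
  ultimately show ?thesis unfolding k_def[symmetric] by (simp add: algebra_simps)
qed


definition deg :: "nat set set \<Rightarrow> nat \<Rightarrow> nat" where
  "deg F l = card {S\<in>F. l\<in>S}"

definition dst :: "nat \<Rightarrow> nat \<Rightarrow> nat" where
  "dst a b = (if b \<le> a then a - b else b - a)"

lemma card_filter_remove:
  assumes "finite F" "S \<in> F"
  shows "card ({T\<in>F. l\<in>T} - {S}) + (if l\<in>S then 1 else 0) = card {T\<in>F. l\<in>T}"
proof (cases "l \<in> S")
  case True
  hence "S \<in> {T\<in>F. l\<in>T}" using assms by simp
  moreover have "finite {T\<in>F. l\<in>T}" using assms by simp
  ultimately have "card ({T\<in>F. l\<in>T} - {S}) = card {T\<in>F. l\<in>T} - 1" "card {T\<in>F. l\<in>T} > 0"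
    by (simp_all add: card_Diff_singleton card_gt_0_iff) blast
  thus ?thesis using True by simp
next
  case False
  hence "{T\<in>F. l\<in>T} - {S} = {T\<in>F. l\<in>T}" by auto
  thus ?thesis using False by simp
qed

lemma deg_swap:
  assumes "finite F" "S \<in> F" "P \<notin> F"
  shows "deg (insert P (F - {S})) l + (if l\<in>S then 1 else 0) = deg F l + (if l\<in>P then 1 else 0)"
proof -
  have fin: "finite ({T\<in>F. l\<in>T} - {S})" using assms by simp
  note cr = card_filter_remove[OF assms(1,2), of l]
  show ?thesis
  proof (cases "l \<in> P")
    case True
    have e: "{T\<in>insert P (F - {S}). l\<in>T} = insert P ({T\<in>F. l\<in>T} - {S})" using True by auto
    have "card (insert P ({T\<in>F. l\<in>T} - {S})) = Suc (card ({T\<in>F. l\<in>T} - {S}))"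
      using fin assms(3) by (intro card_insert_disjoint) auto
    thus ?thesis unfolding deg_def e using True cr by simp
  next
    case False
    have e: "{T\<in>insert P (F - {S}). l\<in>T} = {T\<in>F. l\<in>T} - {S}" using False by auto
    thus ?thesis unfolding deg_def e using False cr by simp
  qed
qed

lemma balance_step:
  assumes F: "F \<subseteq> Pow {0..<K}" and wt: "(\<Sum>S\<in>F. card S) = K * r"
    and nb: "\<not> (\<forall>l<K. deg F l = r)"
  shows "\<exists>F'. F' \<subseteq> Pow {0..<K} \<and> card F' = card F \<and> (\<Sum>S\<in>F'. card S) = K * r \<and>
     (\<Sum>l<K. dst (deg F' l) r) < (\<Sum>l<K. dst (deg F l) r)"
proof -
  have finF: "finite F" using F by (rule finite_subset) simp
  have sumdeg: "(\<Sum>l<K. deg F l) = K * r"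
  proof -
    have "(\<Sum>l\<in>{0..<K}. deg F l) = (\<Sum>S\<in>F. card (S \<inter> {0..<K}))"
      unfolding deg_def by (rule double_count) (auto simp: finF)
    also have "\<dots> = (\<Sum>S\<in>F. card S)"
      by (intro sum.cong refl) (use F in \<open>auto simp: Int_absorb2\<close>)
    finally show ?thesis using wt by (simp add: atLeast0LessThan)
  qed
  obtain i where i: "i < K" "deg F i > r"
  proof (rule ccontr)
    assume "\<not> thesis"
    hence le: "\<forall>l\<in>{..<K}. deg F l \<le> r" using that by force
    from nb obtain l where "l < K" "deg F l \<noteq> r" by auto
    with le have "\<exists>l\<in>{..<K}. deg F l < r" by force
    hence "(\<Sum>l<K. deg F l) < (\<Sum>l<K. r)" using le by (intro sum_strict_mono_ex1) auto
    thus False using sumdeg by simp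
  qed
  obtain j where j: "j < K" "deg F j < r"
  proof (rule ccontr)
    assume "\<not> thesis"
    hence le: "\<forall>l\<in>{..<K}. r \<le> deg F l" using that by force
    have "(\<Sum>l<K. r) < (\<Sum>l<K. deg F l)" using le i by (intro sum_strict_mono_ex1) auto
    thus False using sumdeg by simp
  qed
  have ij: "i \<noteq> j" using i j by auto
  define X where "X = {S\<in>F. i\<in>S \<and> j\<notin>S}"
  define Y where "Y = {S\<in>F. j\<in>S \<and> i\<notin>S}"
  define Z where "Z = {S\<in>F. i\<in>S \<and> j\<in>S}"
  have "{S\<in>F. i\<in>S} = X \<union> Z" "X \<inter> Z = {}" unfolding X_def Z_def by auto
  hence di: "deg F i = card X + card Z" unfolding deg_def
    by (simp add: card_Un_disjoint X_def Z_def finF)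
  have "{S\<in>F. j\<in>S} = Y \<union> Z" "Y \<inter> Z = {}" unfolding Y_def Z_def by auto
  hence dj: "deg F j = card Y + card Z" unfolding deg_def
    by (simp add: card_Un_disjoint Y_def Z_def finF)
  have XY: "card Y < card X" using di dj i j by linarith
  define \<phi> where "\<phi> S = insert j (S - {i})" for S
  have rec: "S = insert i (\<phi> S - {j})" if "S \<in> X" for S
    using that ij unfolding X_def \<phi>_def by auto
  have injphi: "inj_on \<phi> X"
  proof (rule inj_onI)
    fix S T assume st: "S \<in> X" "T \<in> X" "\<phi> S = \<phi> T"
    have "S = insert i (\<phi> S - {j})" using rec st(1) .
    also have "\<dots> = insert i (\<phi> T - {j})" using st(3) by simp
    also have "\<dots> = T" using rec st(2) by simp
    finally show "S = T" .
  qed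
  obtain S where S: "S \<in> X" "\<phi> S \<notin> F"
  proof (rule ccontr)
    assume "\<not> thesis"
    hence "\<phi> ` X \<subseteq> F" using that by blast
    hence "\<phi> ` X \<subseteq> Y" unfolding X_def Y_def \<phi>_def using ij by blast
    hence "card (\<phi> ` X) \<le> card Y" by (intro card_mono) (auto simp: Y_def finF)
    thus False using XY card_image[OF injphi] by simp
  qed
  have SF: "S \<in> F" "i \<in> S" "j \<notin> S" using S unfolding X_def by auto
  have finS: "finite S" using SF F by (auto intro: finite_subset)
  define F' where "F' = insert (\<phi> S) (F - {S})"
  have F'sub: "F' \<subseteq> Pow {0..<K}" unfolding F'_def \<phi>_def using F SF j by auto
  have cardF': "card F' = card F"
  proof -
    have "card F' = Suc (card (F - {S}))" unfolding F'_def using S(2) finF by simp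
    moreover have "card (F - {S}) = card F - 1" using SF(1) finF by (simp add: card_Diff_singleton)
    moreover have "card F > 0" using SF(1) finF card_gt_0_iff by blast
    ultimately show ?thesis by simp
  qed
  have cphi: "card (\<phi> S) = card S"
  proof -
    have "card (\<phi> S) = Suc (card (S - {i}))" unfolding \<phi>_def using SF finS by simp
    moreover have "card (S - {i}) = card S - 1" using SF finS by (simp add: card_Diff_singleton)
    moreover have "card S > 0" using SF finS card_gt_0_iff by blast
    ultimately show ?thesis by simp
  qed
  have wt': "(\<Sum>S\<in>F'. card S) = K * r"
  proof -
    have "(\<Sum>S\<in>F'. card S) = card (\<phi> S) + (\<Sum>S\<in>F - {S}. card S)"
      unfolding F'_def using S finF by (simp add: sum.insert_if)
    also have "\<dots> = (\<Sum>S\<in>F. card S)" using cphi sum.remove[OF finF SF(1), of card] by simp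
    finally show ?thesis using wt by simp
  qed
  have dsw: "deg F' l + (if l\<in>S then 1 else 0) = deg F l + (if l\<in>\<phi> S then 1 else 0)" for l
    unfolding F'_def by (rule deg_swap[OF finF SF(1) S(2)])
  have iphi: "i \<notin> \<phi> S" "j \<in> \<phi> S" unfolding \<phi>_def using ij by auto
  have di': "deg F' i + 1 = deg F i" using dsw[of i] SF(2) iphi by simp
  have dj': "deg F' j = deg F j + 1" using dsw[of j] SF(3) iphi by simp
  have dl': "deg F' l = deg F l" if "l \<noteq> i" "l \<noteq> j" for l
  proof -
    have "l \<in> S \<longleftrightarrow> l \<in> \<phi> S" unfolding \<phi>_def using that by auto
    thus ?thesis using dsw[of l] by (auto split: if_splits)
  qed
  have "(\<Sum>l<K. dst (deg F' l) r) < (\<Sum>l<K. dst (deg F l) r)"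
  proof (rule sum_strict_mono_ex1)
    show "\<forall>l\<in>{..<K}. dst (deg F' l) r \<le> dst (deg F l) r"
    proof
      fix l assume "l \<in> {..<K}"
      show "dst (deg F' l) r \<le> dst (deg F l) r"
      proof (cases "l = i")
        case True thus ?thesis using di' i unfolding dst_def by simp
      next
        case False
        show ?thesis
        proof (cases "l = j")
          case True thus ?thesis using dj' j unfolding dst_def by auto
        next
          case False
          thus ?thesis using dl' \<open>l \<noteq> i\<close> by simp
        qed
      qed
    qed
    show "\<exists>l\<in>{..<K}. dst (deg F' l) r < dst (deg F l) r"
      using di' i unfolding dst_def by force
  qed simp
  thus ?thesis using F'sub cardF' wt' by blast
qed


lemma balance:
  assumes "F \<subseteq> Pow {0..<K}" "(\<Sum>S\<in>F. card S) = K * r"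
  shows "\<exists>F'. F' \<subseteq> Pow {0..<K} \<and> card F' = card F \<and> (\<forall>l<K. deg F' l = r)"
proof -
  have "\<And>F. F \<subseteq> Pow {0..<K} \<Longrightarrow> (\<Sum>S\<in>F. card S) = K * r \<Longrightarrow> (\<Sum>l<K. dst (deg F l) r) = m \<Longrightarrow>
      \<exists>F'. F' \<subseteq> Pow {0..<K} \<and> card F' = card F \<and> (\<forall>l<K. deg F' l = r)" for m
  proof (induction m rule: less_induct)
    case (less m)
    show ?case
    proof (cases "\<forall>l<K. deg F l = r")
      case True thus ?thesis using less.prems by blast
    next
      case False
      from balance_step[OF less.prems(1,2) False] obtain F1 where
        F1: "F1 \<subseteq> Pow {0..<K}" "card F1 = card F" "(\<Sum>S\<in>F1. card S) = K * r"
            "(\<Sum>l<K. dst (deg F1 l) r) < (\<Sum>l<K. dst (deg F l) r)" by blast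
      from less.IH[OF _ F1(1) F1(3) refl] F1(4) less.prems(3) F1(2) show ?thesis by auto
    qed
  qed
  thus ?thesis using assms by blast
qed

lemma exists_family:
  fixes K r n a2 a3 :: nat
  assumes "a2 \<le> K choose 2" "a3 \<le> K choose 3" "n = 1 + K + a2 + a3" "K * r = K + 2 * a2 + 3 * a3"
  shows "\<exists>F. F \<subseteq> Pow {0..<K} \<and> card F = n \<and> (\<Sum>S\<in>F. card S) = K * r"
proof -
  define L where "L j = {S. S \<subseteq> {0..<K} \<and> card S = j}" for j
  have cL: "card (L j) = K choose j" for j unfolding L_def using n_subsets[of "{0..<K}" j] by simp
  have finL: "finite (L j)" for j unfolding L_def by (rule finite_subset[of _ "Pow {0..<K}"]) auto
  obtain P where P: "P \<subseteq> L 2" "card P = a2" using obtain_subset_with_card_n[of a2 "L 2"] assms cL by metis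
  obtain Q where Q: "Q \<subseteq> L 3" "card Q = a3" using obtain_subset_with_card_n[of a3 "L 3"] assms cL by metis
  define F where "F = L 0 \<union> L 1 \<union> P \<union> Q"
  have finP: "finite P" "finite Q" using P Q finL by (auto intro: finite_subset)
  have d1: "L 0 \<inter> L 1 = {}" "(L 0 \<union> L 1) \<inter> P = {}" "(L 0 \<union> L 1 \<union> P) \<inter> Q = {}"
    using P Q unfolding L_def by (auto simp: subset_iff)
  have "card F = card (L 0) + card (L 1) + card P + card Q"
    unfolding F_def using d1 finL finP by (simp add: card_Un_disjoint)
  hence cF: "card F = n" using cL P Q assms by simp
  have sL: "(\<Sum>S\<in>A. card S) = j * card A" if "A \<subseteq> L j" for A j
    using that unfolding L_def by (simp add: subset_iff)
  have "(\<Sum>S\<in>F. card S) = (\<Sum>S\<in>L 0. card S) + (\<Sum>S\<in>L 1. card S) + (\<Sum>S\<in>P. card S) + (\<Sum>S\<in>Q. card S)"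
    unfolding F_def using d1 finL finP by (simp add: sum.union_disjoint)
  also have "\<dots> = 0 * card (L 0) + 1 * card (L 1) + 2 * card P + 3 * card Q"
    using sL[of "L 0" 0] sL[of "L 1" 1] sL[OF P(1)] sL[OF Q(1)] by simp
  also have "\<dots> = K * r" using cL P Q assms by simp
  finally have "(\<Sum>S\<in>F. card S) = K * r" .
  moreover have "F \<subseteq> Pow {0..<K}" unfolding F_def L_def using P Q unfolding L_def by auto
  ultimately show ?thesis using cF by blast
qed

lemma base_from_family:
  assumes F: "F \<subseteq> Pow {0..<K}" "card F = n" "\<forall>l<K. deg F l = r"
  shows "\<exists>B. is_base_Snr n r B \<and> card B \<le> K"
proof -
  have finF: "finite F" using F(1) by (rule finite_subset) simp
  obtain f where f: "bij_betw f {1..n} F"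
    using finF F(2) by (metis ex_bij_betw_nat_finite_1)
  define A where "A j = {x\<in>{1..n}. j \<in> f x}" for j
  define B where "B = A ` {0..<K}"
  have cA: "card (A j) = r" if "j < K" for j
  proof -
    have "f ` A j = {S\<in>F. j\<in>S}" unfolding A_def using f by (auto simp: bij_betw_def)
    moreover have "inj_on f (A j)" using f unfolding A_def bij_betw_def by (auto intro: inj_on_subset)
    ultimately have "card (A j) = card {S\<in>F. j\<in>S}" by (metis card_image)
    thus ?thesis using F(3) that unfolding deg_def by simp
  qed
  have Bsub: "B \<subseteq> r_subsets n r" unfolding B_def r_subsets_def using cA by (auto simp: A_def)
  have "is_base_Snr n r B"
    unfolding is_base_Snr_def
  proof (intro conjI Bsub allI impI)
    fix \<sigma> assume h: "\<sigma> permutes {1..n} \<and> (\<forall>A\<in>B. \<sigma> ` A = A)"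
    show "\<sigma> = id"
    proof
      fix x show "\<sigma> x = id x"
      proof (cases "x \<in> {1..n}")
        case False thus ?thesis using h permutes_not_in by fastforce
      next
        case True
        have sx: "\<sigma> x \<in> {1..n}" using permutes_in_image[of \<sigma> "{1..n}" x] h True by blast
        have "f (\<sigma> x) = f x"
        proof
          have eq: "j \<in> f (\<sigma> x) \<longleftrightarrow> j \<in> f x" if "j < K" for j
          proof -
            have "\<sigma> ` A j = A j" using h that unfolding B_def by auto
            hence "\<sigma> x \<in> A j \<longleftrightarrow> x \<in> A j"
              using h permutes_inj[of \<sigma> "{1..n}"] by (metis inj_image_mem_iff)
            thus ?thesis using True sx unfolding A_def by auto
          qed
          have "f (\<sigma> x) \<in> F" "f x \<in> F" using bij_betw_apply[OF f sx] bij_betw_apply[OF f True] by simp_all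
          hence "f (\<sigma> x) \<subseteq> {0..<K}" "f x \<subseteq> {0..<K}"
            using PowD[OF subsetD[OF F(1)]] by simp_all
          hence k1: "\<forall>y\<in>f (\<sigma> x). y < K" and k2: "\<forall>y\<in>f x. y < K" by auto
          show "f (\<sigma> x) \<subseteq> f x" using k1 eq by blast
          show "f x \<subseteq> f (\<sigma> x)" using k2 eq by blast
        qed
        hence "\<sigma> x = x" using inj_onD[OF bij_betw_imp_inj_on[OF f] _ sx True] by blast
        thus ?thesis by simp
      qed
    qed
  qed
  moreover have "card B \<le> K" unfolding B_def using card_image_le[of "{0..<K}" A] by simp
  ultimately show ?thesis by blast
qed



lemma choose2: "2 * (K choose 2) = K * (K - (1::nat))"
proof -
  have "even (K * (K - 1))" by auto
  thus ?thesis by (simp add: choose_two)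
qed

lemma choose3: "6 * (K choose 3) = K * (K - 1) * (K - (2::nat))"
proof (induction K)
  case 0 thus ?case by simp
next
  case (Suc K)
  have "(Suc K choose 3) = (K choose 2) + (K choose 3)"
    by (simp add: numeral_3_eq_3 numeral_2_eq_2)
  hence "6 * (Suc K choose 3) = 3 * (2 * (K choose 2)) + 6 * (K choose 3)" by simp
  also have "\<dots> = 3 * (K * (K - 1)) + K * (K - 1) * (K - 2)" using Suc.IH choose2[of K] by simp
  also have "\<dots> = Suc K * (Suc K - 1) * (Suc K - 2)"
    by (cases K; cases "K - 1"; simp add: algebra_simps)
  finally show ?case .
qed

lemma arith_core:
  fixes K r n :: nat
  assumes H1: "6*n \<le> K*K + (2*r+3)*K + 6"
  and H2: "K*K + (2*r+1)*K + 5 \<le> 6*n + 2*r"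
  and H3: "K \<le> r"
  and H4: "3*K + 2*r + 1 \<le> K*K"
  and H5: "2*r*(K+2) + K*K + 2*K + 2 \<le> K*K*K"
  shows "\<exists>a2 a3. a2 \<le> K choose 2 \<and> a3 \<le> K choose 3 \<and> n = 1 + K + a2 + a3 \<and> K*r = K + 2*a2 + 3*a3"
proof -
  have K1: "K \<ge> 1" using H4 by (cases K) auto
  define b2 :: int where "b2 = 3*int n - 3 - 2*int K - int K*int r"
  define b3 :: int where "b3 = int K*(int r+1) - 2*int n + 2"
  have "int (6*n) \<le> int (K*K + (2*r+3)*K + 6)" using H1 by (simp only: of_nat_le_iff)
  hence h1: "6*int n \<le> int K*K + (2*r+3)*K + 6" by (simp add: algebra_simps)
  have "int (K*K + (2*r+1)*K + 5) \<le> int (6*n + 2*r)" using H2 by (simp only: of_nat_le_iff)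
  hence h2: "int K*K + (2*r+1)*K + 5 \<le> 6*n + 2*r" by (simp add: algebra_simps)
  have "int (3*K + 2*r + 1) \<le> int (K*K)" using H4 by (simp only: of_nat_le_iff)
  hence h4: "3*int K + 2*r + 1 \<le> K*K" by (simp add: algebra_simps)
  have "int (2*r*(K+2) + K*K + 2*K + 2) \<le> int (K*K*K)" using H5 by (simp only: of_nat_le_iff)
  hence h5: "2*int r*(K+2) + K*K + 2*K + 2 \<le> int K*K*K" by (simp add: algebra_simps)
  have kk: "int K * K \<le> int K * r" using H3 by (simp add: mult_left_mono)
  have c2: "2 * int (K choose 2) = int K * (int K - 1)" using arg_cong[OF choose2[of K], of int] K1 by (simp add: of_nat_diff)
  have c3: "6 * int (K choose 3) = int K * (int K - 1) * (int K - 2)"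
  proof (cases "K \<ge> 2")
    case True thus ?thesis using arg_cong[OF choose3[of K], of int] by (simp add: of_nat_diff)
  next
    case False hence "K = 1" using K1 by simp
    thus ?thesis by simp
  qed
  have b2pos: "b2 \<ge> 0" unfolding b2_def using h2 h4 by (simp add: algebra_simps)
  have b2le: "b2 \<le> int (K choose 2)" unfolding b2_def using h1 c2 by (simp add: algebra_simps)
  have b3pos: "b3 \<ge> 0" unfolding b3_def using h1 kk by (simp add: algebra_simps)
  have b3le: "b3 \<le> int (K choose 3)" unfolding b3_def using h2 h5 c3 by (simp add: algebra_simps)
  show ?thesis
  proof (intro exI conjI)
    show "nat b2 \<le> K choose 2" using b2le by simp
    show "nat b3 \<le> K choose 3" using b3le by simp
    show "n = 1 + K + nat b2 + nat b3" using b2pos b3pos unfolding b2_def b3_def by (simp add: algebra_simps)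
    have e: "int K * int r = int K + 2*b2 + 3*b3" unfolding b2_def b3_def by (simp add: algebra_simps)
    have "int (K*r) = int (K + 2 * nat b2 + 3 * nat b3)" using e b2pos b3pos by simp
    thus "K*r = K + 2 * nat b2 + 3 * nat b3" by (simp only: of_nat_eq_iff)
  qed
qed



lemma poly1:
  fixes s :: real assumes "s \<ge> 79/25"
  shows "7*s^2 - 27*s + 17 \<ge> 0"
proof -
  define u where "u = s - 79/25"
  have u: "u \<ge> 0" "s = 79/25 + u" using assms u_def by auto
  have "7*s^2 - 27*s + 17 = 7*u^2 + (431/25)*u + 987/625"
    unfolding u(2) by (simp add: algebra_simps power2_eq_square)
  also have "\<dots> \<ge> 0" using u(1) by simp
  finally show ?thesis .
qed

lemma poly2:
  fixes s :: real assumes "s \<ge> 79/25"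
  shows "21*s^3 - 88*s^2 + 93*s - 32 \<ge> 0"
proof -
  define u where "u = s - 79/25"
  have u: "u \<ge> 0" "s = 79/25 + u" using assms u_def by auto
  have "21*s^3 - 88*s^2 + 93*s - 32 = 21*u^3 + (2777/25)*u^2 + (103708/625)*u + 715494/15625"
    unfolding u(2) by (simp add: power2_eq_square power3_eq_cube field_simps)
  also have "\<dots> \<ge> 0" using u(1) by simp
  finally show ?thesis .
qed



lemma small_case:
  fixes K r :: nat and s :: real
  assumes r: "6 \<le> r" "r \<le> 9" and s: "s \<ge> 0" "s^2 = real r"
    and HK: "6 * real r * s + 3 * real r \<le> real (K*K + (2*r+3)*K)"
    and H3: "K \<le> r"
  shows "3*K + 2*r + 1 \<le> K*K \<and> 2*r*(K+2) + K*K + 2*K + 2 \<le> K*K*K"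
proof -
  have sb: "s \<ge> c" if "c^2 \<le> real r" "c \<ge> 0" for c :: real
    using power2_le_imp_le[of c s] that s by simp
  have "r = 6 \<or> r = 7 \<or> r = 8 \<or> r = 9" using r by arith
  moreover have ?thesis if "r = 6"
  proof -
    have s1: "s \<ge> 61/25" using sb[of "61/25"] that by (simp add: power2_eq_square)
    have "K \<ge> 6"
    proof (rule ccontr)
      assume "\<not> K \<ge> 6" hence k: "K \<le> 5" by simp
      have "K*K + (2*r+3)*K \<le> 5*5 + 15*5" using that mult_le_mono[OF k k] k by simp
      hence "real (K*K + (2*r+3)*K) \<le> 100" by linarith
      thus False using HK that s1 by simp
    qed
    hence "K = 6" using H3 that by simp
    thus ?thesis using that by simp
  qed
  moreover have ?thesis if "r = 7"
  proof -
    have s1: "s \<ge> 5/2" using sb[of "5/2"] that by (simp add: power2_eq_square)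
    have "K \<ge> 6"
    proof (rule ccontr)
      assume "\<not> K \<ge> 6" hence k: "K \<le> 5" by simp
      have "K*K + (2*r+3)*K \<le> 5*5 + 17*5" using that mult_le_mono[OF k k] k by simp
      hence "real (K*K + (2*r+3)*K) \<le> 110" by linarith
      thus False using HK that s1 by simp
    qed
    hence "K = 6 \<or> K = 7" using H3 that by arith
    thus ?thesis using that by auto
  qed
  moreover have ?thesis if "r = 8"
  proof -
    have s1: "s \<ge> 5/2" using sb[of "5/2"] that by (simp add: power2_eq_square)
    have "K \<ge> 6"
    proof (rule ccontr)
      assume "\<not> K \<ge> 6" hence k: "K \<le> 5" by simp
      have "K*K + (2*r+3)*K \<le> 5*5 + 19*5" using that mult_le_mono[OF k k] k by simp
      hence "real (K*K + (2*r+3)*K) \<le> 120" by linarith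
      thus False using HK that s1 by simp
    qed
    hence "K = 6 \<or> K = 7 \<or> K = 8" using H3 that by arith
    thus ?thesis using that by auto
  qed
  moreover have ?thesis if "r = 9"
  proof -
    have s1: "s \<ge> 3" using sb[of "3"] that by (simp add: power2_eq_square)
    have "K \<ge> 7"
    proof (rule ccontr)
      assume "\<not> K \<ge> 7" hence k: "K \<le> 6" by simp
      have "K*K + (2*r+3)*K \<le> 6*6 + 21*6" using that mult_le_mono[OF k k] k by simp
      hence "real (K*K + (2*r+3)*K) \<le> 162" by linarith
      thus False using HK that s1 by simp
    qed
    hence "K = 7 \<or> K = 8 \<or> K = 9" using H3 that by arith
    thus ?thesis using that by auto
  qed
  ultimately show ?thesis by blast
qed

lemma large_case:
  fixes K r :: nat and s :: real
  assumes r: "10 \<le> r" and s: "s \<ge> 0" "s^2 = real r"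
    and Kt: "real K \<ge> 3*s - 3"
  shows "3*K + 2*r + 1 \<le> K*K \<and> 2*r*(K+2) + K*K + 2*K + 2 \<le> K*K*K"
proof -
  have s1: "s \<ge> 79/25" using power2_le_imp_le[of "79/25" s] s r by (simp add: power2_eq_square)
  define t where "t = 3*s - 3"
  define k where "k = real K"
  have kt: "k \<ge> t" using Kt unfolding t_def k_def .
  have t1: "t \<ge> 3/2" unfolding t_def using s1 by simp
  have rr: "real r = s^2" using s by simp
  have "k*k - 3*k - (t*t - 3*t) = (k - t) * (k + t - 3)" by (simp add: algebra_simps)
  also have "\<dots> \<ge> 0" using kt t1 by (intro mult_nonneg_nonneg) auto
  finally have a1: "k*k - 3*k \<ge> t*t - 3*t" by simp
  have a2: "t*t - 3*t - 2*real r - 1 = 7*s^2 - 27*s + 17" unfolding t_def rr by (simp add: algebra_simps power2_eq_square)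
  have "3*k + 2*real r + 1 \<le> k*k" using a1 a2 poly1[OF s1] by linarith
  hence A: "3*K + 2*r + 1 \<le> K*K" unfolding k_def by (simp flip: of_nat_mult of_nat_add of_nat_le_iff)
  define g where "g x = x^3 - x^2 - (2 + 2*real r)*x - 2 - 4*real r" for x :: real
  have "k*k - k - (t*t - t) = (k - t) * (k + t - 1)" by (simp add: algebra_simps)
  also have "\<dots> \<ge> 0" using kt t1 by (intro mult_nonneg_nonneg) auto
  finally have "k^2 - k \<ge> t^2 - t" by (simp add: power2_eq_square)
  moreover have "k*t \<ge> t*t" using kt t1 by (simp add: mult_right_mono)
  moreover have "3*t^2 - 2*t - 2 - 2*real r \<ge> 0"
  proof -
    have "3*t^2 - 2*t - 2 - 2*real r = 25*s^2 - 60*s + 31" unfolding t_def rr by (simp add: algebra_simps power2_eq_square)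
    also have "\<dots> = 25*(s - 79/25)^2 + 98*(s-79/25) + 2276/25"
      by (simp add: algebra_simps power2_eq_square)
    also have "\<dots> \<ge> 0" using s1 by (intro add_nonneg_nonneg mult_nonneg_nonneg) auto
    finally show ?thesis .
  qed
  ultimately have f2: "k^2 + k*t + t^2 - k - t - 2 - 2*real r \<ge> 0" by (simp add: power2_eq_square)
  have "g k - g t = (k - t) * (k^2 + k*t + t^2 - k - t - 2 - 2*real r)"
    unfolding g_def by (simp add: algebra_simps power2_eq_square power3_eq_cube)
  also have "\<dots> \<ge> 0" using kt f2 by simp
  finally have "g k \<ge> g t" by simp
  moreover have "g t = 21*s^3 - 88*s^2 + 93*s - 32"
    unfolding g_def t_def rr by (simp add: algebra_simps power2_eq_square power3_eq_cube)
  ultimately have "g k \<ge> 0" using poly2[OF s1] by linarith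
  hence "2*real r*(k+2) + k*k + 2*k + 2 \<le> k*k*k" unfolding g_def by (simp add: algebra_simps power2_eq_square power3_eq_cube)
  hence "real (2*r*(K+2) + K*K + 2*K + 2) \<le> real (K*K*K)" unfolding k_def by (simp add: algebra_simps)
  hence B: "2*r*(K+2) + K*K + 2*K + 2 \<le> K*K*K" by (simp only: of_nat_le_iff)
  show ?thesis using A B by simp
qed



theorem corollary3p4:
  fixes n r :: nat
  assumes "0 < n" and "0 < r"
    and "real n < (real r ^ 2 + real r) / 2"
    and "real n \<ge> real r powr (3/2) + real r / 2 + 1"
  shows "int (base_size_Snr n r) =
    \<lceil>sqrt (3 * (2 * real n + real r - 5/4) + real r ^ 2) - real r - 3/2\<rceil>"
proof -
  define s where "s = sqrt (real r)"
  define Rd where "Rd = 3 * (2 * real n + real r - 5/4) + real r ^ 2"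
  define x where "x = sqrt Rd - real r - 3/2"
  have s0: "s \<ge> 0" and s2: "s^2 = real r" unfolding s_def by auto
  have "real r powr (3/2) = real r powr 1 * real r powr (1/2)"
    using powr_add[of "real r" 1 "1/2"] by simp
  also have "\<dots> = real r * s" unfolding s_def using assms(2)
    by (simp add: powr_half_sqrt)
  finally have nlow: "real n \<ge> real r * s + real r / 2 + 1" using assms(4) by simp
  have nup: "2 * real n < real r * real r + real r" using assms(3) by (simp add: power2_eq_square)
  have r5: "r \<ge> 6"
  proof (rule ccontr)
    assume "\<not> r \<ge> 6" hence "r \<le> 5" by simp
    have "real r * s + 1 < real r * real r / 2" using nlow nup by linarith
    hence "real r * s < real r * (real r / 2)" by simp
    hence "s < real r / 2" using assms(2) by (simp only: mult_less_cancel_left_pos of_nat_0_less_iff)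
    hence "s^2 < (real r / 2)^2" using s0 by (intro power_strict_mono) auto
    hence "real r < real r * real r / 4" using s2 by (simp add: power2_eq_square)
    hence "4 < real r" using assms(2) by (simp add: field_simps)
    hence "r = 5" using \<open>r \<le> 5\<close> by simp
    hence "real n < 15" "real n \<ge> 5 * s + 7/2" using nup nlow by auto
    hence "n < 15" "real n \<ge> 5 * s + 7/2" by simp_all
    hence "real n \<le> 14" "real n \<ge> 5 * s + 7/2" by simp_all
    hence "s \<le> 21/10" by linarith
    hence "s^2 \<le> (21/10)^2" using s0 by (intro power_mono) auto
    thus False using s2 \<open>r = 5\<close> by (simp add: power2_eq_square)
  qed
  have Rdpos: "Rd \<ge> (real r + 3*s - 3/2)^2"
  proof -
    have "(real r + 3*s - 3/2)^2 = real r ^2 + 6 * real r * s + 6 * real r - 9 * s + 9/4"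
      using s2 by (simp add: algebra_simps power2_eq_square)
    thus ?thesis unfolding Rd_def using nlow s0 by simp
  qed
  have xt: "x \<ge> 3*s - 3"
  proof -
    have "real r + 3*s - 3/2 \<ge> 0" using s0 r5 by simp
    hence "sqrt Rd \<ge> real r + 3*s - 3/2" using Rdpos real_le_rsqrt by blast
    thus ?thesis unfolding x_def by simp
  qed
  have sge: "s \<ge> 2" using power2_le_imp_le[of 2 s] s2 s0 r5 by simp
  have xpos: "x > 0" using xt sge by simp
  define K where "K = nat \<lceil>x\<rceil>"
  have Kx: "real K \<ge> x" "real K < x + 1" unfolding K_def using xpos
    by (auto simp: of_nat_nat) (linarith)
  have Kceil: "int K = \<lceil>x\<rceil>" unfolding K_def using xpos by simp
  have "sqrt Rd \<le> real K + real r + 3/2" using Kx unfolding x_def by simp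
  moreover have Rd0: "Rd \<ge> 0" using Rdpos zero_le_power2 order_trans by blast
  ultimately have "(sqrt Rd)^2 \<le> (real K + real r + 3/2)^2" by (intro power_mono) auto
  hence "Rd \<le> (real K + real r + 3/2)^2" using Rd0 by simp
  hence H1r: "6 * real n \<le> real K * real K + (2 * real r + 3) * real K + 6"
    unfolding Rd_def by (simp add: algebra_simps power2_eq_square)
  hence "real (6*n) \<le> real (K*K + (2*r+3)*K + 6)" by (simp add: algebra_simps)
  hence H1: "6*n \<le> K*K + (2*r+3)*K + 6" by (simp only: of_nat_le_iff)
  have "real K + real r + 1/2 < sqrt Rd" using Kx unfolding x_def by simp
  hence "(real K + real r + 1/2)^2 < Rd"
  proof -
    assume a: "real K + real r + 1/2 < sqrt Rd"
    have "(real K + real r + 1/2)^2 < (sqrt Rd)^2" using a by (intro power_strict_mono) auto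
    thus ?thesis using Rd0 by simp
  qed
  hence "real K * real K + (2 * real r + 1) * real K + 4 < 6 * real n + 2 * real r"
    unfolding Rd_def by (simp add: algebra_simps power2_eq_square)
  hence "real (K*K + (2*r+1)*K + 4) < real (6*n + 2*r)" by (simp add: algebra_simps)
  hence H2: "K*K + (2*r+1)*K + 5 \<le> 6*n + 2*r" by (simp only: of_nat_less_iff)
  have "Rd \<le> (2 * real r + 3/2)^2" unfolding Rd_def using nup by (simp add: algebra_simps power2_eq_square)
  hence "sqrt Rd \<le> 2 * real r + 3/2" by (simp add: real_sqrt_le_iff real_le_lsqrt)
  hence "x \<le> real r" unfolding x_def by simp
  hence H3: "K \<le> r" unfolding K_def by (simp add: nat_le_iff ceiling_le_iff)
  have HK: "6 * real r * s + 3 * real r \<le> real (K*K + (2*r+3)*K)"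
    using H1r nlow by (simp add: algebra_simps)
  have H45: "3*K + 2*r + 1 \<le> K*K \<and> 2*r*(K+2) + K*K + 2*K + 2 \<le> K*K*K"
  proof (cases "r \<le> 9")
    case True thus ?thesis using small_case[OF r5 True s0 s2 HK H3] by blast
  next
    case False thus ?thesis using large_case[of r s K] s0 s2 Kx xt by simp
  qed
  obtain a2 a3 where a: "a2 \<le> K choose 2" "a3 \<le> K choose 3" "n = 1 + K + a2 + a3" "K*r = K + 2*a2 + 3*a3"
    using arith_core[OF H1 H2 H3] H45 by blast
  obtain F where F: "F \<subseteq> Pow {0..<K}" "card F = n" "(\<Sum>S\<in>F. card S) = K * r"
    using exists_family[OF a] by blast
  obtain F' where F': "F' \<subseteq> Pow {0..<K}" "card F' = card F" "\<forall>l<K. deg F' l = r"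
    using balance[OF F(1,3)] by blast
  obtain B where B: "is_base_Snr n r B" "card B \<le> K"
    using base_from_family[OF F'(1) _ F'(3)] F'(2) F(2) by auto
  have lower: "K \<le> card B'" if "is_base_Snr n r B'" for B'
  proof -
    define k where "k = card B'"
    have "6*n \<le> k*k + (2*r+3)*k + 6" using base_lower[OF that] unfolding k_def .
    hence "real (6*n) \<le> real (k*k + (2*r+3)*k + 6)" by (simp only: of_nat_le_iff)
    hence "Rd \<le> (real k + real r + 3/2)^2" unfolding Rd_def by (simp add: algebra_simps power2_eq_square)
    hence "sqrt Rd \<le> real k + real r + 3/2" by (simp add: real_le_lsqrt real_sqrt_le_iff)
    hence "x \<le> real k" unfolding x_def by simp
    thus ?thesis unfolding K_def k_def by (simp add: nat_le_iff ceiling_le_iff)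
  qed
  have cB: "card B = K" using lower[OF B(1)] B(2) by simp
  have "base_size_Snr n r = K"
    unfolding base_size_Snr_def
  proof (rule Least_equality)
    show "\<exists>B. is_base_Snr n r B \<and> card B = K" using B(1) cB by blast
    show "\<And>y. \<exists>B. is_base_Snr n r B \<and> card B = y \<Longrightarrow> K \<le> y" using lower by blast
  qed
  thus ?thesis using Kceil unfolding x_def Rd_def by simp
qed


end
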